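(* Let $\mathbf{L}$ be an intermediate propositional logic and let $\mathbf{QL}$ be an intermediate predicate logic. For all formulas $A(x)$ and $B$ with $x$ not free in $B$: (1) the $\varepsilon\tau$-translations $(\mathit{CD})^{\varepsilon\tau}$, $(Q_\exists)^{\varepsilon\tau}$ and $(Q_\forall)^{\varepsilon\tau}$ are provable in the $\varepsilon\tau$-calculus $\varepsilon\tau(\mathbf{L})$; (2) the formulas $\mathit{CD}$, $Q_\exists$ and $Q_\forall$ themselves are provable in the extended calculus $\varepsilon\tau^+(\mathbf{QL})$, where $\mathit{CD}$: $\forall x(A(x)\lor B)\to(\forall x\,A(x)\lor B)$; $Q_\exists$: $(B\to\exists x\,A(x))\to\exists x(B\to A(x))$; $Q_\forall$: $(\forall x\,A(x)\to B)\to\exists x(A(x)\to B)$.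
   Context: An intermediate propositional logic is a set of propositional formulas containing intuitionistic propositional logic, contained in classical propositional logic, and closed under modus ponens and substitution. An intermediate predicate logic is a set of first-order formulas containing intuitionistic predicate logic, contained in classical predicate logic, closed under substitution, modus ponens and the quantifier rules "from $B\to A(x)$ infer $B\to\forall y\,A(y)$" and "from $A(x)\to B$ infer $\exists y\,A(y)\to B$" ($x$ not free in the conclusion). $\varepsilon\tau$-terms: for any formula $A(x)$ with $x$ free, $\varepsilon x\,A(x)$ and $\tau x\,A(x)$ are terms (terms are identified up to renaming of bound variables; substitution renames bound variables to avoid clashes). Critical formulas are all formulas $A(t)\to A(\varepsilon x\,A(x))$ and $A(\tau x\,A(x))\to A(t)$, $t$ any term. $\varepsilon\tau(\mathbf{L})$: the quantifier-free language with predicate symbols, function symbols and $\varepsilon\tau$-terms (formulas inside $\varepsilon\tau$-terms also quantifier-free); $\vdash_{\varepsilon\tau(\mathbf{L})}B$ means there is a finite sequence of formulas ending in $B$ each of which is a substitution instance of a formula of $\mathbf{L}$, a critical formula, or follows from earlier ones by modus ponens. $\varepsilon\tau^+(\mathbf{QL})$: the full first-order language with quantifiers extended by $\varepsilon\tau$-terms (built from arbitrary formulas) and critical formulas; provability means derivability in $\mathbf{QL}$ (its axioms, modus ponens, quantifier rules) from critical formulas. The $\varepsilon\tau$-translation $A^{\varepsilon\tau}$: identity on atomic formulas, commutes with $\land,\lor,\to,\lnot$, $(\exists x\,A(x))^{\varepsilon\tau}=A^{\varepsilon\tau}(\varepsilon x\,A^{\varepsilon\tau}(x))$, $(\forall x\,A(x))^{\varepsilon\tau}=A^{\varepsilon\tau}(\tau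 x\,A^{\varepsilon\tau}(x))$. *)

theory Defs
  imports Main
begin

datatype pf = PV nat | PNeg pf | PConj pf pf | PDisj pf pf | PImp pf pf

inductive ipc :: "pf \<Rightarrow> bool" where
  i1: "ipc (PImp A (PImp B A))"
| i2: "ipc (PImp (PImp A B) (PImp (PImp A (PImp B C)) (PImp A C)))"
| i3: "ipc (PImp A (PImp B (PConj A B)))"
| i4: "ipc (PImp (PConj A B) A)"
| i5: "ipc (PImp (PConj A B) B)"
| i6: "ipc (PImp A (PDisj A B))"
| i7: "ipc (PImp B (PDisj A B))"
| i8: "ipc (PImp (PImp A C) (PImp (PImp B C) (PImp (PDisj A B) C)))"
| i9: "ipc (PImp (PImp A B) (PImp (PImp A (PNeg B)) (PNeg A)))"
| i10: "ipc (PImp (PNeg A) (PImp A B))"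
| mp: "ipc (PImp A B) \<Longrightarrow> ipc A \<Longrightarrow> ipc B"

primrec peval :: "(nat \<Rightarrow> bool) \<Rightarrow> pf \<Rightarrow> bool" where
  "peval v (PV n) = v n"
| "peval v (PNeg A) = (\<not> peval v A)"
| "peval v (PConj A B) = (peval v A \<and> peval v B)"
| "peval v (PDisj A B) = (peval v A \<or> peval v B)"
| "peval v (PImp A B) = (peval v A \<longrightarrow> peval v B)"

definition cpc :: "pf \<Rightarrow> bool" where
  "cpc A \<longleftrightarrow> (\<forall>v. peval v A)"

primrec psubP :: "(nat \<Rightarrow> pf) \<Rightarrow> pf \<Rightarrow> pf" where
  "psubP s (PV n) = s n"
| "psubP s (PNeg A) = PNeg (psubP s A)"
| "psubP s (PConj A B) = PConj (psubP s A) (psubP s B)"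
| "psubP s (PDisj A B) = PDisj (psubP s A) (psubP s B)"
| "psubP s (PImp A B) = PImp (psubP s A) (psubP s B)"

definition intermediate_prop :: "pf set \<Rightarrow> bool" where
  "intermediate_prop L \<longleftrightarrow>
     {A. ipc A} \<subseteq> L \<and> L \<subseteq> {A. cpc A} \<and>
     (\<forall>A B. PImp A B \<in> L \<longrightarrow> A \<in> L \<longrightarrow> B \<in> L) \<and>
     (\<forall>s A. A \<in> L \<longrightarrow> psubP s A \<in> L)"

section \<open>First-order formulas with epsilon/tau terms (locally nameless)\<close>

text \<open>Free variables are names Fr n; bound variables are de Bruijn indices Bd i.
  Eps A and Tau A bind index 0 in A, as do All A and Ex A. Terms are thus
  identified up to renaming of bound variables automatically.\<close>

datatype ('f,'p) trm = Fr nat | Bd nat | Fn 'f "('f,'p) trm list"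
  | Eps "('f,'p) fm" | Tau "('f,'p) fm"
and ('f,'p) fm = Atom 'p "('f,'p) trm list" | Neg "('f,'p) fm"
  | Conj "('f,'p) fm" "('f,'p) fm" | Disj "('f,'p) fm" "('f,'p) fm"
  | Imp "('f,'p) fm" "('f,'p) fm" | All "('f,'p) fm" | Ex "('f,'p) fm"

primrec liftT :: "nat \<Rightarrow> nat \<Rightarrow> ('f,'p) trm \<Rightarrow> ('f,'p) trm"
  and liftF :: "nat \<Rightarrow> nat \<Rightarrow> ('f,'p) fm \<Rightarrow> ('f,'p) fm" where
  "liftT c n (Fr x) = Fr x"
| "liftT c n (Bd i) = (if c \<le> i then Bd (i + n) else Bd i)"
| "liftT c n (Fn f ts) = Fn f (map (liftT c n) ts)"
| "liftT c n (Eps A) = Eps (liftF (Suc c) n A)"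
| "liftT c n (Tau A) = Tau (liftF (Suc c) n A)"
| "liftF c n (Atom P ts) = Atom P (map (liftT c n) ts)"
| "liftF c n (Neg A) = Neg (liftF c n A)"
| "liftF c n (Conj A B) = Conj (liftF c n A) (liftF c n B)"
| "liftF c n (Disj A B) = Disj (liftF c n A) (liftF c n B)"
| "liftF c n (Imp A B) = Imp (liftF c n A) (liftF c n B)"
| "liftF c n (All A) = All (liftF (Suc c) n A)"
| "liftF c n (Ex A) = Ex (liftF (Suc c) n A)"

text \<open>Substituting term u for bound index k (capture-avoiding de Bruijn substitution).
  For a body A (index 0 free), sbstF 0 t A is A(t).\<close>
primrec sbstT :: "nat \<Rightarrow> ('f,'p) trm \<Rightarrow> ('f,'p) trm \<Rightarrow> ('f,'p) trm"
  and sbstF :: "nat \<Rightarrow> ('f,'p) trm \<Rightarrow> ('f,'p) fm \<Rightarrow> ('f,'p) fm" where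
  "sbstT k u (Fr x) = Fr x"
| "sbstT k u (Bd i) = (if i < k then Bd i else if i = k then liftT 0 k u else Bd (i - 1))"
| "sbstT k u (Fn f ts) = Fn f (map (sbstT k u) ts)"
| "sbstT k u (Eps A) = Eps (sbstF (Suc k) u A)"
| "sbstT k u (Tau A) = Tau (sbstF (Suc k) u A)"
| "sbstF k u (Atom P ts) = Atom P (map (sbstT k u) ts)"
| "sbstF k u (Neg A) = Neg (sbstF k u A)"
| "sbstF k u (Conj A B) = Conj (sbstF k u A) (sbstF k u B)"
| "sbstF k u (Disj A B) = Disj (sbstF k u A) (sbstF k u B)"
| "sbstF k u (Imp A B) = Imp (sbstF k u A) (sbstF k u B)"
| "sbstF k u (All A) = All (sbstF (Suc k) u A)"
| "sbstF k u (Ex A) = Ex (sbstF (Suc k) u A)"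

text \<open>All dangling bound indices are below k (k = 0: well-formed, locally closed).\<close>
primrec lcT :: "nat \<Rightarrow> ('f,'p) trm \<Rightarrow> bool"
  and lcF :: "nat \<Rightarrow> ('f,'p) fm \<Rightarrow> bool" where
  "lcT k (Fr x) = True"
| "lcT k (Bd i) = (i < k)"
| "lcT k (Fn f ts) = (list_all (lcT k) ts)"
| "lcT k (Eps A) = lcF (Suc k) A"
| "lcT k (Tau A) = lcF (Suc k) A"
| "lcF k (Atom P ts) = (list_all (lcT k) ts)"
| "lcF k (Neg A) = lcF k A"
| "lcF k (Conj A B) = (lcF k A \<and> lcF k B)"
| "lcF k (Disj A B) = (lcF k A \<and> lcF k B)"
| "lcF k (Imp A B) = (lcF k A \<and> lcF k B)"
| "lcF k (All A) = lcF (Suc k) A"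
| "lcF k (Ex A) = lcF (Suc k) A"

primrec fvT :: "('f,'p) trm \<Rightarrow> nat set"
  and fvF :: "('f,'p) fm \<Rightarrow> nat set" where
  "fvT (Fr x) = {x}"
| "fvT (Bd i) = {}"
| "fvT (Fn f ts) = (\<Union> (set (map fvT ts)))"
| "fvT (Eps A) = fvF A"
| "fvT (Tau A) = fvF A"
| "fvF (Atom P ts) = (\<Union> (set (map fvT ts)))"
| "fvF (Neg A) = fvF A"
| "fvF (Conj A B) = fvF A \<union> fvF B"
| "fvF (Disj A B) = fvF A \<union> fvF B"
| "fvF (Imp A B) = fvF A \<union> fvF B"
| "fvF (All A) = fvF A"
| "fvF (Ex A) = fvF A"

text \<open>No epsilon/tau terms (the ordinary first-order language).\<close>
primrec efT :: "('f,'p) trm \<Rightarrow> bool"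
  and efF :: "('f,'p) fm \<Rightarrow> bool" where
  "efT (Fr x) = True"
| "efT (Bd i) = True"
| "efT (Fn f ts) = (list_all (efT) ts)"
| "efT (Eps A) = False"
| "efT (Tau A) = False"
| "efF (Atom P ts) = (list_all (efT) ts)"
| "efF (Neg A) = efF A"
| "efF (Conj A B) = (efF A \<and> efF B)"
| "efF (Disj A B) = (efF A \<and> efF B)"
| "efF (Imp A B) = (efF A \<and> efF B)"
| "efF (All A) = efF A"
| "efF (Ex A) = efF A"

text \<open>Quantifier-free, also inside epsilon/tau terms.\<close>
primrec qfT :: "('f,'p) trm \<Rightarrow> bool"
  and qfF :: "('f,'p) fm \<Rightarrow> bool" where
  "qfT (Fr x) = True"
| "qfT (Bd i) = True"
| "qfT (Fn f ts) = (list_all (qfT) ts)"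
| "qfT (Eps A) = qfF A"
| "qfT (Tau A) = qfF A"
| "qfF (Atom P ts) = (list_all (qfT) ts)"
| "qfF (Neg A) = qfF A"
| "qfF (Conj A B) = (qfF A \<and> qfF B)"
| "qfF (Disj A B) = (qfF A \<and> qfF B)"
| "qfF (Imp A B) = (qfF A \<and> qfF B)"
| "qfF (All A) = False"
| "qfF (Ex A) = False"

definition base_fm :: "('f,'p) fm \<Rightarrow> bool" where
  "base_fm A \<longleftrightarrow> lcF 0 A \<and> efF A"

primrec tsubT :: "(nat \<Rightarrow> ('f,'p) trm) \<Rightarrow> nat \<Rightarrow> ('f,'p) trm \<Rightarrow> ('f,'p) trm"
  and tsubF :: "(nat \<Rightarrow> ('f,'p) trm) \<Rightarrow> nat \<Rightarrow> ('f,'p) fm \<Rightarrow> ('f,'p) fm" where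
  "tsubT s d (Fr x) = liftT 0 d (s x)"
| "tsubT s d (Bd i) = Bd i"
| "tsubT s d (Fn f ts) = Fn f (map (tsubT s d) ts)"
| "tsubT s d (Eps A) = Eps (tsubF s (Suc d) A)"
| "tsubT s d (Tau A) = Tau (tsubF s (Suc d) A)"
| "tsubF s d (Atom P ts) = Atom P (map (tsubT s d) ts)"
| "tsubF s d (Neg A) = Neg (tsubF s d A)"
| "tsubF s d (Conj A B) = Conj (tsubF s d A) (tsubF s d B)"
| "tsubF s d (Disj A B) = Disj (tsubF s d A) (tsubF s d B)"
| "tsubF s d (Imp A B) = Imp (tsubF s d A) (tsubF s d B)"
| "tsubF s d (All A) = All (tsubF s (Suc d) A)"
| "tsubF s d (Ex A) = Ex (tsubF s (Suc d) A)"

text \<open>Instantiating the argument places (dangling indices 0..n-1) of a formula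
  by a list of terms ts; e counts the binders passed.\<close>
primrec instT :: "nat \<Rightarrow> ('f,'p) trm list \<Rightarrow> ('f,'p) trm \<Rightarrow> ('f,'p) trm"
  and instF :: "nat \<Rightarrow> ('f,'p) trm list \<Rightarrow> ('f,'p) fm \<Rightarrow> ('f,'p) fm" where
  "instT e ts (Fr x) = Fr x"
| "instT e ts (Bd i) = (if i < e then Bd i
      else if i - e < length ts then liftT 0 e (ts ! (i - e)) else Bd (i - length ts))"
| "instT e ts (Fn f us) = Fn f (map (instT e ts) us)"
| "instT e ts (Eps A) = Eps (instF (Suc e) ts A)"
| "instT e ts (Tau A) = Tau (instF (Suc e) ts A)"
| "instF e ts (Atom P us) = Atom P (map (instT e ts) us)"
| "instF e ts (Neg A) = Neg (instF e ts A)"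
| "instF e ts (Conj A B) = Conj (instF e ts A) (instF e ts B)"
| "instF e ts (Disj A B) = Disj (instF e ts A) (instF e ts B)"
| "instF e ts (Imp A B) = Imp (instF e ts A) (instF e ts B)"
| "instF e ts (All A) = All (instF (Suc e) ts A)"
| "instF e ts (Ex A) = Ex (instF (Suc e) ts A)"

text \<open>Substitution of formulas for predicate symbols: an n-ary predicate P is replaced
  by the formula s P n, whose argument places are the dangling indices 0..n-1.\<close>
primrec psubT :: "('p \<Rightarrow> nat \<Rightarrow> ('f,'p) fm) \<Rightarrow> ('f,'p) trm \<Rightarrow> ('f,'p) trm"
  and psubF :: "('p \<Rightarrow> nat \<Rightarrow> ('f,'p) fm) \<Rightarrow> ('f,'p) fm \<Rightarrow> ('f,'p) fm" where
  "psubT s (Fr x) = Fr x"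
| "psubT s (Bd i) = Bd i"
| "psubT s (Fn f ts) = Fn f (map (psubT s) ts)"
| "psubT s (Eps A) = Eps (psubF s A)"
| "psubT s (Tau A) = Tau (psubF s A)"
| "psubF s (Atom P ts) = instF 0 (map (psubT s) ts) (s P (length ts))"
| "psubF s (Neg A) = Neg (psubF s A)"
| "psubF s (Conj A B) = Conj (psubF s A) (psubF s B)"
| "psubF s (Disj A B) = Disj (psubF s A) (psubF s B)"
| "psubF s (Imp A B) = Imp (psubF s A) (psubF s B)"
| "psubF s (All A) = All (psubF s A)"
| "psubF s (Ex A) = Ex (psubF s A)"

definition psub_ok :: "(('f,'p) fm \<Rightarrow> bool) \<Rightarrow> ('p \<Rightarrow> nat \<Rightarrow> ('f,'p) fm) \<Rightarrow> bool" where
  "psub_ok LF s \<longleftrightarrow> (\<forall>P n. lcF n (s P n) \<and> LF (s P n))"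

definition tsub_ok :: "(('f,'p) trm \<Rightarrow> bool) \<Rightarrow> (nat \<Rightarrow> ('f,'p) trm) \<Rightarrow> bool" where
  "tsub_ok LT s \<longleftrightarrow> (\<forall>x. lcT 0 (s x) \<and> LT (s x))"

inductive hderiv :: "('f,'p) fm set \<Rightarrow> ('f,'p) fm \<Rightarrow> bool" for Ax where
  ax: "F \<in> Ax \<Longrightarrow> hderiv Ax F"
| mp: "hderiv Ax (Imp F G) \<Longrightarrow> hderiv Ax F \<Longrightarrow> hderiv Ax G"
| gen: "hderiv Ax (Imp B (sbstF 0 (Fr x) A)) \<Longrightarrow> x \<notin> fvF B \<Longrightarrow> x \<notin> fvF A
          \<Longrightarrow> hderiv Ax (Imp B (All A))"
| exr: "hderiv Ax (Imp (sbstF 0 (Fr x) A) B) \<Longrightarrow> x \<notin> fvF B \<Longrightarrow> x \<notin> fvF A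
          \<Longrightarrow> hderiv Ax (Imp (Ex A) B)"

inductive int_schema :: "('f,'p) fm \<Rightarrow> bool" where
  "int_schema (Imp A (Imp B A))"
| "int_schema (Imp (Imp A B) (Imp (Imp A (Imp B C)) (Imp A C)))"
| "int_schema (Imp A (Imp B (Conj A B)))"
| "int_schema (Imp (Conj A B) A)"
| "int_schema (Imp (Conj A B) B)"
| "int_schema (Imp A (Disj A B))"
| "int_schema (Imp B (Disj A B))"
| "int_schema (Imp (Imp A C) (Imp (Imp B C) (Imp (Disj A B) C)))"
| "int_schema (Imp (Imp A B) (Imp (Imp A (Neg B)) (Neg A)))"
| "int_schema (Imp (Neg A) (Imp A B))"
| "int_schema (Imp (All A) (sbstF 0 t A))"
| "int_schema (Imp (sbstF 0 t A) (Ex A))"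

definition IQC :: "('f,'p) fm set" where
  "IQC = {F. hderiv {G. int_schema G \<and> base_fm G} F}"

definition CQC :: "('f,'p) fm set" where
  "CQC = {F. hderiv {G. (int_schema G \<or> (\<exists>A. G = Disj A (Neg A))) \<and> base_fm G} F}"

definition intermediate_pred :: "('f,'p) fm set \<Rightarrow> bool" where
  "intermediate_pred QL \<longleftrightarrow>
     QL \<subseteq> {A. base_fm A} \<and> IQC \<subseteq> QL \<and> QL \<subseteq> CQC \<and>
     (\<forall>A B. Imp A B \<in> QL \<longrightarrow> A \<in> QL \<longrightarrow> B \<in> QL) \<and>
     (\<forall>A B x. Imp B (sbstF 0 (Fr x) A) \<in> QL \<longrightarrow> x \<notin> fvF B \<longrightarrow> x \<notin> fvF A
        \<longrightarrow> Imp B (All A) \<in> QL) \<and>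
     (\<forall>A B x. Imp (sbstF 0 (Fr x) A) B \<in> QL \<longrightarrow> x \<notin> fvF B \<longrightarrow> x \<notin> fvF A
        \<longrightarrow> Imp (Ex A) B \<in> QL) \<and>
     (\<forall>s A. A \<in> QL \<longrightarrow> tsub_ok (\<lambda>t. lcT 0 t \<and> efT t) s \<longrightarrow> tsubF s 0 A \<in> QL) \<and>
     (\<forall>s A. A \<in> QL \<longrightarrow> psub_ok efF s \<longrightarrow> psubF s A \<in> QL)"

section \<open>Critical formulas and the epsilon-tau calculi\<close>

text \<open>A is a body (index 0 is the variable x), so Eps A is epsilon x A(x).\<close>
definition critical :: "('f,'p) fm \<Rightarrow> bool" where
  "critical F \<longleftrightarrow> (\<exists>A t. lcF 1 A \<and> lcT 0 t \<and>
      (F = Imp (sbstF 0 t A) (sbstF 0 (Eps A) A) \<or>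
       F = Imp (sbstF 0 (Tau A) A) (sbstF 0 t A)))"

primrec pinst :: "(nat \<Rightarrow> ('f,'p) fm) \<Rightarrow> pf \<Rightarrow> ('f,'p) fm" where
  "pinst s (PV n) = s n"
| "pinst s (PNeg A) = Neg (pinst s A)"
| "pinst s (PConj A B) = Conj (pinst s A) (pinst s B)"
| "pinst s (PDisj A B) = Disj (pinst s A) (pinst s B)"
| "pinst s (PImp A B) = Imp (pinst s A) (pinst s B)"

inductive et_prov :: "pf set \<Rightarrow> ('f,'p) fm \<Rightarrow> bool" for L where
  inst: "A \<in> L \<Longrightarrow> (\<forall>n. lcF 0 (s n) \<and> qfF (s n)) \<Longrightarrow> et_prov L (pinst s A)"
| crit: "critical F \<Longrightarrow> qfF F \<Longrightarrow> et_prov L F"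
| mp: "et_prov L (Imp F G) \<Longrightarrow> et_prov L F \<Longrightarrow> et_prov L G"

text \<open>The extended calculus epsilon-tau+(QL): QL (all substitution instances of its
  theorems in the extended language), modus ponens and quantifier rules, from the
  critical formulas.\<close>
definition ext_axioms :: "('f,'p) fm set \<Rightarrow> ('f,'p) fm set" where
  "ext_axioms QL = {tsubF s 0 (psubF r A) | A r s. A \<in> QL \<and> psub_ok (\<lambda>_. True) r
      \<and> tsub_ok (\<lambda>_. True) s} \<union> {F. critical F}"

definition ext_prov :: "('f,'p) fm set \<Rightarrow> ('f,'p) fm \<Rightarrow> bool" where
  "ext_prov QL F \<longleftrightarrow> hderiv (ext_axioms QL) F"

primrec etr :: "('f,'p) fm \<Rightarrow> ('f,'p) fm" where
  "etr (Atom P ts) = Atom P ts"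
| "etr (Neg A) = Neg (etr A)"
| "etr (Conj A B) = Conj (etr A) (etr B)"
| "etr (Disj A B) = Disj (etr A) (etr B)"
| "etr (Imp A B) = Imp (etr A) (etr B)"
| "etr (Ex A) = sbstF 0 (Eps (etr A)) (etr A)"
| "etr (All A) = sbstF 0 (Tau (etr A)) (etr A)"

text \<open>The three schemata; A is a body (the variable x is index 0), B is a formula in
  which x does not occur.\<close>
definition CD :: "('f,'p) fm \<Rightarrow> ('f,'p) fm \<Rightarrow> ('f,'p) fm" where
  "CD A B = Imp (All (Disj A B)) (Disj (All A) B)"

definition Q_ex :: "('f,'p) fm \<Rightarrow> ('f,'p) fm \<Rightarrow> ('f,'p) fm" where
  "Q_ex A B = Imp (Imp B (Ex A)) (Ex (Imp B A))"

definition Q_all :: "('f,'p) fm \<Rightarrow> ('f,'p) fm \<Rightarrow> ('f,'p) fm" where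
  "Q_all A B = Imp (Imp (All A) B) (Ex (Imp A B))"

end

theory Submission
  imports Defs
begin

lemma inst_sbst: fixes u :: "('f,'p) trm" and F :: "('f,'p) fm" shows "\<forall>e. instT e [t] u = sbstT e t u" and "\<forall>e. instF e [t] F = sbstF e t F"
  by (induct u and F) auto

lemma lc_mono: fixes u :: "('f,'p) trm" and F :: "('f,'p) fm" shows "\<forall>k m. lcT k u \<longrightarrow> k \<le> m \<longrightarrow> lcT m u" and "\<forall>k m. lcF k F \<longrightarrow> k \<le> m \<longrightarrow> lcF m F"
  apply (induct u and F)
  by (auto simp: list_all_iff)

lemma sbst_Bd0: fixes u :: "('f,'p) trm" and F :: "('f,'p) fm" shows "\<forall>k. lcT (Suc k) u \<longrightarrow> sbstT k (Bd 0) u = u" and "\<forall>k. lcF (Suc k) F \<longrightarrow> sbstF k (Bd 0) F = F"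
  by (induct u and F) (auto simp: list_all_iff map_idI)

lemma inst_lc: fixes u :: "('f,'p) trm" and F :: "('f,'p) fm" shows "\<forall>e. lcT e u \<longrightarrow> instT e ts u = u" and "\<forall>e. lcF e F \<longrightarrow> instF e ts F = F"
  by (induct u and F) (auto simp: list_all_iff map_idI)

lemma sbst_lc: fixes u :: "('f,'p) trm" and F :: "('f,'p) fm" shows "\<forall>k j. lcT k u \<longrightarrow> k \<le> j \<longrightarrow> sbstT j t u = u" and "\<forall>k j. lcF k F \<longrightarrow> k \<le> j \<longrightarrow> sbstF j t F = F"
  apply (induct u and F) 
  apply (auto simp: list_all_iff intro!: map_idI)
  done

lemma tsub_id: fixes u :: "('f,'p) trm" and F :: "('f,'p) fm" shows "\<forall>d. (\<forall>x\<in>fvT u. s x = Fr x) \<longrightarrow> tsubT s d u = u" and "\<forall>d. (\<forall>x\<in>fvF F. s x = Fr x) \<longrightarrow> tsubF s d F = F"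
  by (induct u and F) (auto simp: map_idI)

lemma tsub_sbst: fixes u :: "('f,'p) trm" and F :: "('f,'p) fm" shows "\<forall>k. y \<notin> fvT u \<longrightarrow> tsubT (Fr(y:=t)) k (sbstT k (Fr y) u) = sbstT k t u" and "\<forall>k. y \<notin> fvF F \<longrightarrow> tsubF (Fr(y:=t)) k (sbstF k (Fr y) F) = sbstF k t F"
  by (induct u and F) auto

lemma fv_finite: fixes u :: "('f,'p) trm" and F :: "('f,'p) fm" shows "finite (fvT u)" and "finite (fvF F)"
  by (induct u and F) auto

lemma lift_fv: fixes u :: "('f,'p) trm" and F :: "('f,'p) fm" shows "\<forall>c n. fvT (liftT c n u) = fvT u" and "\<forall>c n. fvF (liftF c n F) = fvF F"
  by (induct u and F) auto

lemma sbst_fv: fixes u :: "('f,'p) trm" and F :: "('f,'p) fm" shows "\<forall>k. fvT (sbstT k t u) \<subseteq> fvT u \<union> fvT t" and "\<forall>k. fvF (sbstF k t F) \<subseteq> fvF F \<union> fvT t"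
  by (induct u and F) (auto simp: lift_fv)

lemma lift_lc: fixes u :: "('f,'p) trm" and F :: "('f,'p) fm" shows "\<forall>m c n. lcT m u \<longrightarrow> lcT (m+n) (liftT c n u)" and "\<forall>m c n. lcF m F \<longrightarrow> lcF (m+n) (liftF c n F)"
  by (induct u and F) (auto simp: list_all_iff)

lemma lift_qf: fixes u :: "('f,'p) trm" and F :: "('f,'p) fm" shows "\<forall>c n. qfT (liftT c n u) = qfT u" and "\<forall>c n. qfF (liftF c n F) = qfF F"
  by (induct u and F) (auto simp: list_all_iff)

lemma sbst_qf: fixes u :: "('f,'p) trm" and F :: "('f,'p) fm" shows "\<forall>k. qfT t \<longrightarrow> qfT u \<longrightarrow> qfT (sbstT k t u)" and "\<forall>k. qfT t \<longrightarrow> qfF F \<longrightarrow> qfF (sbstF k t F)"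
  by (induct u and F) (auto simp: list_all_iff lift_qf)


lemma sbst_lc2: fixes u :: "('f,'p) trm" and F :: "('f,'p) fm"
  shows "\<forall>m k. lcT (Suc m) u \<longrightarrow> k \<le> m \<longrightarrow> lcT (m-k) t \<longrightarrow> lcT m (sbstT k t u)"
    and "\<forall>m k. lcF (Suc m) F \<longrightarrow> k \<le> m \<longrightarrow> lcT (m-k) t \<longrightarrow> lcF m (sbstF k t F)"
proof (induct u and F)
  case (Bd i)
  have "lcT (m - k + k) (liftT 0 k t)" if "lcT (m-k) t" for m k using lift_lc(1) that by blast
  then show ?case by (auto, metis le_add_diff_inverse2 less_Suc_eq_le)
qed (auto simp: list_all_iff)

lemma etr_lc: fixes u :: "('f,'p) trm" and F :: "('f,'p) fm"
  shows "True" and "\<forall>k. lcF k F \<longrightarrow> lcF k (etr F)"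
proof (induct u and F)
  case (Ex x)
  then show ?case using sbst_lc2(2) by fastforce
next
  case (All x)
  then show ?case using sbst_lc2(2) by fastforce
qed auto

lemma ef_qf: fixes u :: "('f,'p) trm" and F :: "('f,'p) fm"
  shows "efT u \<longrightarrow> qfT u" and "True"
  by (induct u and F) (auto simp: list_all_iff)

lemma etr_qf: fixes u :: "('f,'p) trm" and F :: "('f,'p) fm"
  shows "True" and "efF F \<longrightarrow> qfF (etr F)"
  by (induct u and F) (auto simp: sbst_qf list_all_iff ef_qf)

lemma psub_pinst: "psubF r (pinst \<sigma> \<phi>) = pinst (\<lambda>n. psubF r (\<sigma> n)) \<phi>"
  by (induct \<phi>) auto

lemma tsub_pinst: "tsubF s d (pinst \<sigma> \<phi>) = pinst (\<lambda>n. tsubF s d (\<sigma> n)) \<phi>"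
  by (induct \<phi>) auto

lemma base_pinst: "(\<forall>n. base_fm (\<sigma> n)) \<Longrightarrow> base_fm (pinst \<sigma> \<phi>)"
  by (induct \<phi>) (auto simp: base_fm_def)

lemma ipc_IQC:
  assumes "ipc \<phi>" "\<forall>n. base_fm (\<sigma> n)"
  shows "hderiv {G. int_schema G \<and> base_fm G} (pinst \<sigma> \<phi>)"
  using assms
proof (induct \<phi> rule: ipc.induct)
  case (mp A B)
  then show ?case using hderiv.mp by fastforce
qed (rule hderiv.ax, simp only: mem_Collect_eq, rule conjI, (simp, rule int_schema.intros), rule base_pinst, assumption)+


lemma IQC_QL: "intermediate_pred QL \<Longrightarrow> F \<in> IQC \<Longrightarrow> F \<in> QL"
  unfolding intermediate_pred_def by blast

lemma prop_ext:
  fixes fs :: "nat \<Rightarrow> ('f,'p) fm"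
  assumes QL: "intermediate_pred QL" and ip: "ipc \<phi>" and lc: "\<forall>n. lcF 0 (fs n)"
  shows "pinst fs \<phi> \<in> ext_axioms QL"
proof -
  define \<sigma> where "\<sigma> = (\<lambda>n. Atom undefined (replicate n (Fr 0)) :: ('f,'p) fm)"
  have b: "\<forall>n. base_fm (\<sigma> n)" by (simp add: \<sigma>_def base_fm_def list_all_iff)
  have "pinst \<sigma> \<phi> \<in> QL" using IQC_QL[OF QL] ipc_IQC[OF ip b] by (simp add: IQC_def)
  moreover define r where "r = (\<lambda>(P::'p) n. fs n)"
  have pok: "psub_ok (\<lambda>_. True) r" unfolding psub_ok_def r_def using lc lc_mono(2) by blast
  have tok: "tsub_ok (\<lambda>_. True) (Fr :: nat \<Rightarrow> ('f,'p) trm)" by (simp add: tsub_ok_def)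
  have "psubF r (\<sigma> n) = fs n" for n using inst_lc(2)[of "fs n"] lc by (simp add: \<sigma>_def r_def)
  then have "psubF r (pinst \<sigma> \<phi>) = pinst fs \<phi>" by (simp add: psub_pinst)
  moreover have "tsubF Fr 0 (pinst fs \<phi>) = pinst fs \<phi>" using tsub_id(2) by blast
  ultimately show ?thesis unfolding ext_axioms_def using pok tok by (smt (verit) UnI1 mem_Collect_eq)
qed

lemma fresh: "\<exists>y. y \<notin> fvF (F :: ('f,'p) fm)"
  using fv_finite(2) infinite_UNIV_nat ex_new_if_finite by blast

lemma qax_ex:
  fixes X :: "('f,'p) fm"
  assumes QL: "intermediate_pred QL" and lX: "lcF 1 X" and lt: "lcT 0 t"
  shows "Imp (sbstF 0 t X) (fm.Ex X) \<in> ext_axioms QL"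
proof -
  obtain y where y: "y \<notin> fvF X" using fresh by blast
  define G where "G = (Imp (Atom undefined [Fr y]) (fm.Ex (Atom undefined [Bd 0])) :: ('f,'p) fm)"
  have "int_schema (Imp (sbstF 0 (Fr y) (Atom undefined [Bd 0])) (fm.Ex (Atom (undefined::'p) [Bd 0 :: ('f,'p) trm])))"
    by (rule int_schema.intros)
  then have "int_schema G" by (simp add: G_def)
  moreover have "base_fm G" by (simp add: G_def base_fm_def)
  ultimately have "G \<in> QL" using IQC_QL[OF QL] by (simp add: IQC_def hderiv.ax)
  define r where "r = (\<lambda>(P::'p) (n::nat). if n = 1 then X else Atom P [])"
  have pok: "psub_ok (\<lambda>_. True) r" unfolding psub_ok_def r_def using lX by simp
  define s where "s = (Fr(y:=t))"
  have tok: "tsub_ok (\<lambda>_. True) s" using lt by (simp add: tsub_ok_def s_def)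
  have "psubF r G = Imp (sbstF 0 (Fr y) X) (fm.Ex X)"
    using lX by (simp add: G_def r_def inst_sbst sbst_Bd0)
  moreover have "tsubF s 1 X = X" using tsub_id(2)[of X s] y by (auto simp: s_def)
  moreover have "tsubF s 0 (sbstF 0 (Fr y) X) = sbstF 0 t X"
    using tsub_sbst(2)[of y X t] y by (simp add: s_def)
  ultimately have "tsubF s 0 (psubF r G) = Imp (sbstF 0 t X) (fm.Ex X)" by simp
  then show ?thesis unfolding ext_axioms_def using pok tok \<open>G \<in> QL\<close>
    by (smt (verit) UnI1 mem_Collect_eq)
qed

lemma qax_all:
  fixes X :: "('f,'p) fm"
  assumes QL: "intermediate_pred QL" and lX: "lcF 1 X" and lt: "lcT 0 t"
  shows "Imp (fm.All X) (sbstF 0 t X) \<in> ext_axioms QL"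
proof -
  obtain y where y: "y \<notin> fvF X" using fresh by blast
  define G where "G = (Imp (fm.All (Atom undefined [Bd 0])) (Atom undefined [Fr y]) :: ('f,'p) fm)"
  have "int_schema (Imp (fm.All (Atom (undefined::'p) [Bd 0 :: ('f,'p) trm])) (sbstF 0 (Fr y) (Atom undefined [Bd 0])))"
    by (rule int_schema.intros)
  then have "int_schema G" by (simp add: G_def)
  moreover have "base_fm G" by (simp add: G_def base_fm_def)
  ultimately have "G \<in> QL" using IQC_QL[OF QL] by (simp add: IQC_def hderiv.ax)
  define r where "r = (\<lambda>(P::'p) (n::nat). if n = 1 then X else Atom P [])"
  have pok: "psub_ok (\<lambda>_. True) r" unfolding psub_ok_def r_def using lX by simp
  define s where "s = (Fr(y:=t))"
  have tok: "tsub_ok (\<lambda>_. True) s" using lt by (simp add: tsub_ok_def s_def)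
  have "psubF r G = Imp (fm.All X) (sbstF 0 (Fr y) X)"
    using lX by (simp add: G_def r_def inst_sbst sbst_Bd0)
  moreover have "tsubF s 1 X = X" using tsub_id(2)[of X s] y by (auto simp: s_def)
  moreover have "tsubF s 0 (sbstF 0 (Fr y) X) = sbstF 0 t X"
    using tsub_sbst(2)[of y X t] y by (simp add: s_def)
  ultimately have "tsubF s 0 (psubF r G) = Imp (fm.All X) (sbstF 0 t X)" by simp
  then show ?thesis unfolding ext_axioms_def using pok tok \<open>G \<in> QL\<close>
    by (smt (verit) UnI1 mem_Collect_eq)
qed


lemma qf_inst: "qfT t \<Longrightarrow> qfF F \<Longrightarrow> qfF (sbstF k t F)"
  using sbst_qf(2) by blast

lemma lc_inst: "lcF 1 X \<Longrightarrow> lcT 0 t \<Longrightarrow> lcF 0 (sbstF 0 t X)"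
  using sbst_lc2(2)[of X t] by auto

lemma sb_closed: "lcF 0 B \<Longrightarrow> sbstF k t B = B"
  using sbst_lc(2) by blast

lemma lc01: "lcF 0 B \<Longrightarrow> lcF 1 B"
  using lc_mono(2) by blast

lemma prop3:
  assumes "intermediate_pred QL" "ipc \<phi>" "lcF 0 X" "lcF 0 Y" "lcF 0 Z"
  shows "hderiv (ext_axioms QL) (pinst (\<lambda>n. if n = 0 then X else if n = 1 then Y else Z) \<phi>)"
  by (rule hderiv.ax, rule prop_ext) (use assms in auto)

lemma crit_tau_I: "lcF 1 X \<Longrightarrow> lcT 0 t \<Longrightarrow> critical (Imp (sbstF 0 (Tau X) X) (sbstF 0 t X))"
  unfolding critical_def by (intro exI[of _ X] exI[of _ t]) simp

lemma crit_eps_I: "lcF 1 X \<Longrightarrow> lcT 0 t \<Longrightarrow> critical (Imp (sbstF 0 t X) (sbstF 0 (trm.Eps X) X))"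
  unfolding critical_def by (intro exI[of _ X] exI[of _ t]) simp

context
  fixes QL :: "('f,'p) fm set"
  assumes QL: "intermediate_pred QL"
begin

abbreviation pr :: "('f,'p) fm \<Rightarrow> bool" where "pr F \<equiv> hderiv (ext_axioms QL) F"

lemma hK: "lcF 0 X \<Longrightarrow> lcF 0 Y \<Longrightarrow> pr (Imp X (Imp Y X))"
  using prop3[OF QL ipc.i1[of "PV 0" "PV 1"], of X Y X] by simp

lemma hS: "lcF 0 X \<Longrightarrow> lcF 0 Y \<Longrightarrow> lcF 0 Z \<Longrightarrow> pr (Imp (Imp X Y) (Imp (Imp X (Imp Y Z)) (Imp X Z)))"
  using prop3[OF QL ipc.i2[of "PV 0" "PV 1" "PV 2"], of X Y Z] by simp

lemma h6: "lcF 0 X \<Longrightarrow> lcF 0 Y \<Longrightarrow> pr (Imp X (Disj X Y))"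
  using prop3[OF QL ipc.i6[of "PV 0" "PV 1"], of X Y X] by simp

lemma h7: "lcF 0 X \<Longrightarrow> lcF 0 Y \<Longrightarrow> pr (Imp Y (Disj X Y))"
  using prop3[OF QL ipc.i7[of "PV 1" "PV 0"], of X Y X] by simp

lemma h8: "lcF 0 X \<Longrightarrow> lcF 0 Y \<Longrightarrow> lcF 0 Z \<Longrightarrow> pr (Imp (Imp X Z) (Imp (Imp Y Z) (Imp (Disj X Y) Z)))"
  using prop3[OF QL ipc.i8[of "PV 0" "PV 2" "PV 1"], of X Y Z] by simp

lemma hR3: "lcF 0 X \<Longrightarrow> lcF 0 Y \<Longrightarrow> lcF 0 Z \<Longrightarrow> pr (Imp X Y) \<Longrightarrow> pr (Imp X (Imp Y Z)) \<Longrightarrow> pr (Imp X Z)"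
  by (rule hderiv.mp[OF hderiv.mp[OF hS[of X Y Z]]])

lemma hKr: "lcF 0 X \<Longrightarrow> lcF 0 Y \<Longrightarrow> pr Y \<Longrightarrow> pr (Imp X Y)"
  by (rule hderiv.mp[OF hK[of Y X]])

lemma htrans: "lcF 0 X \<Longrightarrow> lcF 0 Y \<Longrightarrow> lcF 0 Z \<Longrightarrow> pr (Imp X Y) \<Longrightarrow> pr (Imp Y Z) \<Longrightarrow> pr (Imp X Z)"
proof -
  assume a: "lcF 0 X" "lcF 0 Y" "lcF 0 Z" "pr (Imp X Y)" "pr (Imp Y Z)"
  have l: "lcF 0 (Imp Y Z)" using a(2,3) by simp
  show ?thesis by (rule hR3[OF a(1,2,3,4) hKr[OF a(1) l a(5)]])
qed

lemma hdmono: "lcF 0 X \<Longrightarrow> lcF 0 Y \<Longrightarrow> lcF 0 B \<Longrightarrow> pr (Imp X Y) \<Longrightarrow> pr (Imp (Disj X B) (Disj Y B))"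
proof -
  assume a: "lcF 0 X" "lcF 0 Y" "lcF 0 B" "pr (Imp X Y)"
  have l1: "lcF 0 (Disj Y B)" using a(2,3) by simp
  have p1: "pr (Imp Y (Disj Y B))" by (rule h6[OF a(2,3)])
  have p2: "pr (Imp X (Disj Y B))" by (rule htrans[OF a(1,2) l1 a(4) p1])
  have p3: "pr (Imp B (Disj Y B))" by (rule h7[OF a(2,3)])
  show ?thesis by (rule hderiv.mp[OF hderiv.mp[OF h8[OF a(1,3) l1] p2] p3])
qed

lemma hcons: "lcF 0 X \<Longrightarrow> lcF 0 Y \<Longrightarrow> lcF 0 B \<Longrightarrow> pr (Imp X Y) \<Longrightarrow> pr (Imp (Imp B X) (Imp B Y))"
proof -
  assume a: "lcF 0 X" "lcF 0 Y" "lcF 0 B" "pr (Imp X Y)"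
  have l: "lcF 0 (Imp X Y)" and l2: "lcF 0 (Imp B X)" and l3: "lcF 0 (Imp B (Imp X Y))"
    and l4: "lcF 0 (Imp B Y)" using a(1,2,3) by simp_all
  have p1: "pr (Imp B (Imp X Y))" by (rule hKr[OF a(3) l a(4)])
  have p2: "pr (Imp (Imp B X) (Imp B (Imp X Y)))" by (rule hKr[OF l2 l3 p1])
  have p3: "pr (Imp (Imp B X) (Imp (Imp B (Imp X Y)) (Imp B Y)))" by (rule hS[OF a(3,1,2)])
  show ?thesis by (rule hR3[OF l2 l3 l4 p2 p3])
qed

lemma hante: "lcF 0 X \<Longrightarrow> lcF 0 Y \<Longrightarrow> lcF 0 B \<Longrightarrow> pr (Imp X Y) \<Longrightarrow> pr (Imp (Imp Y B) (Imp X B))"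
proof -
  assume a: "lcF 0 X" "lcF 0 Y" "lcF 0 B" "pr (Imp X Y)"
  have l5: "lcF 0 (Imp Y B)" and l6: "lcF 0 (Imp X (Imp Y B))" and l7: "lcF 0 (Imp X B)"
    using a(1,2,3) by simp_all
  have p1: "pr (Imp (Imp X (Imp Y B)) (Imp X B))" by (rule hderiv.mp[OF hS[OF a(1,2,3)] a(4)])
  have p2: "pr (Imp (Imp Y B) (Imp X (Imp Y B)))" by (rule hK[OF l5 a(1)])
  show ?thesis by (rule htrans[OF l5 l6 l7 p2 p1])
qed

lemma hcrit_tau: "lcF 1 X \<Longrightarrow> lcT 0 t \<Longrightarrow> pr (Imp (sbstF 0 (Tau X) X) (sbstF 0 t X))"
  by (rule hderiv.ax) (simp add: ext_axioms_def crit_tau_I)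

lemma hcrit_eps: "lcF 1 X \<Longrightarrow> lcT 0 t \<Longrightarrow> pr (Imp (sbstF 0 t X) (sbstF 0 (trm.Eps X) X))"
  by (rule hderiv.ax) (simp add: ext_axioms_def crit_eps_I)

lemma htau_all: "lcF 1 X \<Longrightarrow> pr (Imp (sbstF 0 (Tau X) X) (fm.All X))"
proof -
  assume a: "lcF 1 X"
  obtain y where y: "y \<notin> fvF X" using fresh by blast
  have "pr (Imp (sbstF 0 (Tau X) X) (sbstF 0 (Fr y) X))" using a by (intro hcrit_tau) auto
  moreover have "y \<notin> fvF (sbstF 0 (Tau X) X)" using sbst_fv(2)[where t = "Tau X" and F = X] y by auto
  ultimately show ?thesis using y by (rule hderiv.gen)
qed

lemma hex_eps: "lcF 1 X \<Longrightarrow> pr (Imp (fm.Ex X) (sbstF 0 (trm.Eps X) X))"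
proof -
  assume a: "lcF 1 X"
  obtain y where y: "y \<notin> fvF X" using fresh by blast
  have "pr (Imp (sbstF 0 (Fr y) X) (sbstF 0 (trm.Eps X) X))" using a by (intro hcrit_eps) auto
  moreover have "y \<notin> fvF (sbstF 0 (trm.Eps X) X)" using sbst_fv(2)[where t = "trm.Eps X" and F = X] y by auto
  ultimately show ?thesis using y by (rule hderiv.exr)
qed

end


theorem mainTheorem1:
  fixes L :: "pf set" and QL :: "('f,'p) fm set" and A B :: "('f,'p) fm"
  assumes "intermediate_prop L" and "intermediate_pred QL"
    and "lcF 1 A" and "efF A" and "base_fm B"
  shows "et_prov L (etr (CD A B)) \<and> et_prov L (etr (Q_ex A B)) \<and> et_prov L (etr (Q_all A B))
     \<and> ext_prov QL (CD A B) \<and> ext_prov QL (Q_ex A B) \<and> ext_prov QL (Q_all A B)"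
proof -
  note QL = assms(2)
  have lA: "lcF 1 A" and lB: "lcF 0 B" and eB: "efF B" using assms(3,5) by (auto simp: base_fm_def)
  define A' where "A' = etr A"
  define B' where "B' = etr B"
  have lA': "lcF 1 A'" using etr_lc(2) lA A'_def by blast
  have lB': "lcF 0 B'" using etr_lc(2) lB B'_def by blast
  have qA': "qfF A'" using etr_qf(2) assms(4) A'_def by blast
  have qB': "qfF B'" using etr_qf(2) eB B'_def by blast
  have lB'1: "lcF 1 B'" using lc01 lB' by blast
  have lB1: "lcF 1 B" using lc01 lB by blast
  have sB'[simp]: "sbstF k t B' = B'" for k t using sb_closed lB' by blast
  have sB[simp]: "sbstF k t B = B" for k t using sb_closed lB by blast
  have e1: "et_prov L (etr (CD A B))"
  proof -
    have "critical (Imp (sbstF 0 (Tau (Disj A' B')) (Disj A' B')) (sbstF 0 (Tau A') (Disj A' B')))"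
      by (rule crit_tau_I) (use lA' lB'1 in auto)
    moreover have "qfF (Imp (sbstF 0 (Tau (Disj A' B')) (Disj A' B')) (sbstF 0 (Tau A') (Disj A' B')))"
      using qA' qB' by (auto intro!: qf_inst)
    ultimately have "et_prov L (Imp (sbstF 0 (Tau (Disj A' B')) (Disj A' B')) (sbstF 0 (Tau A') (Disj A' B')))"
      by (rule et_prov.crit)
    then show ?thesis by (simp add: CD_def flip: A'_def B'_def)
  qed
  have e2: "et_prov L (etr (Q_ex A B))"
  proof -
    have "critical (Imp (sbstF 0 (trm.Eps A') (Imp B' A')) (sbstF 0 (trm.Eps (Imp B' A')) (Imp B' A')))"
      by (rule crit_eps_I) (use lA' lB'1 in auto)
    moreover have "qfF (Imp (sbstF 0 (trm.Eps A') (Imp B' A')) (sbstF 0 (trm.Eps (Imp B' A')) (Imp B' A')))"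
      using qA' qB' by (auto intro!: qf_inst)
    ultimately have "et_prov L (Imp (sbstF 0 (trm.Eps A') (Imp B' A')) (sbstF 0 (trm.Eps (Imp B' A')) (Imp B' A')))"
      by (rule et_prov.crit)
    then show ?thesis by (simp add: Q_ex_def flip: A'_def B'_def)
  qed
  have e3: "et_prov L (etr (Q_all A B))"
  proof -
    have "critical (Imp (sbstF 0 (Tau A') (Imp A' B')) (sbstF 0 (trm.Eps (Imp A' B')) (Imp A' B')))"
      by (rule crit_eps_I) (use lA' lB'1 in auto)
    moreover have "qfF (Imp (sbstF 0 (Tau A') (Imp A' B')) (sbstF 0 (trm.Eps (Imp A' B')) (Imp A' B')))"
      using qA' qB' by (auto intro!: qf_inst)
    ultimately have "et_prov L (Imp (sbstF 0 (Tau A') (Imp A' B')) (sbstF 0 (trm.Eps (Imp A' B')) (Imp A' B')))"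
      by (rule et_prov.crit)
    then show ?thesis by (simp add: Q_all_def flip: A'_def B'_def)
  qed
  have li: "lcF 0 (sbstF 0 t A)" if "lcT 0 t" for t using lc_inst lA that by blast
  have f1: "ext_prov QL (CD A B)"
  proof -
    define D where "D = Disj A B"
    have lD: "lcF 1 D" using lA lB1 D_def by simp
    have a: "hderiv (ext_axioms QL) (Imp (fm.All D) (Disj (sbstF 0 (Tau D) A) B))"
      using hderiv.ax[OF qax_all[OF QL lD, of "Tau D"]] lD by (simp add: D_def)
    have b: "hderiv (ext_axioms QL) (Imp (Disj (sbstF 0 (Tau D) A) B) (Disj (sbstF 0 (Tau A) A) B))"
      using hcrit_tau[OF QL lD, of "Tau A"] lA by (simp add: D_def)
    have c: "hderiv (ext_axioms QL) (Imp (Disj (sbstF 0 (Tau A) A) B) (Disj (fm.All A) B))"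
      by (rule hdmono[OF QL]) (use li lA lB htau_all[OF QL lA] lD in auto)
    have "hderiv (ext_axioms QL) (Imp (fm.All D) (Disj (fm.All A) B))"
      apply (rule htrans[OF QL _ _ _ a])
      apply (use lD lB li lA in \<open>auto simp: D_def\<close>)[3]
      apply (rule htrans[OF QL _ _ _ b c])
      apply (use lD lB li lA in \<open>auto simp: D_def\<close>)
      done
    then show ?thesis by (simp add: ext_prov_def CD_def D_def)
  qed
  have f2: "ext_prov QL (Q_ex A B)"
  proof -
    define E where "E = Imp B A"
    have lE: "lcF 1 E" using lA lB1 E_def by simp
    have a: "hderiv (ext_axioms QL) (Imp (Imp B (fm.Ex A)) (Imp B (sbstF 0 (trm.Eps A) A)))"
      by (rule hcons[OF QL]) (use li lA lB hex_eps[OF QL lA] in auto)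
    have b: "hderiv (ext_axioms QL) (Imp (Imp B (sbstF 0 (trm.Eps A) A)) (Imp B (sbstF 0 (trm.Eps E) A)))"
      using hcrit_eps[OF QL lE, of "trm.Eps A"] lA by (simp add: E_def)
    have c: "hderiv (ext_axioms QL) (Imp (Imp B (sbstF 0 (trm.Eps E) A)) (fm.Ex E))"
      using hderiv.ax[OF qax_ex[OF QL lE, of "trm.Eps E"]] lE by (simp add: E_def)
    have "hderiv (ext_axioms QL) (Imp (Imp B (fm.Ex A)) (fm.Ex E))"
      apply (rule htrans[OF QL _ _ _ a])
      apply (use lE lB li lA in \<open>auto simp: E_def\<close>)[3]
      apply (rule htrans[OF QL _ _ _ b c])
      apply (use lE lB li lA in \<open>auto simp: E_def\<close>)
      done
    then show ?thesis by (simp add: ext_prov_def Q_ex_def E_def)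
  qed
  have f3: "ext_prov QL (Q_all A B)"
  proof -
    define E where "E = Imp A B"
    have lE: "lcF 1 E" using lA lB1 E_def by simp
    have a: "hderiv (ext_axioms QL) (Imp (Imp (fm.All A) B) (Imp (sbstF 0 (Tau A) A) B))"
      by (rule hante[OF QL]) (use li lA lB htau_all[OF QL lA] in auto)
    have b: "hderiv (ext_axioms QL) (Imp (Imp (sbstF 0 (Tau A) A) B) (Imp (sbstF 0 (trm.Eps E) A) B))"
      using hcrit_eps[OF QL lE, of "Tau A"] lA by (simp add: E_def)
    have c: "hderiv (ext_axioms QL) (Imp (Imp (sbstF 0 (trm.Eps E) A) B) (fm.Ex E))"
      using hderiv.ax[OF qax_ex[OF QL lE, of "trm.Eps E"]] lE by (simp add: E_def)
    have "hderiv (ext_axioms QL) (Imp (Imp (fm.All A) B) (fm.Ex E))"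
      apply (rule htrans[OF QL _ _ _ a])
      apply (use lE lB li lA in \<open>auto simp: E_def\<close>)[3]
      apply (rule htrans[OF QL _ _ _ b c])
      apply (use lE lB li lA in \<open>auto simp: E_def\<close>)
      done
    then show ?thesis by (simp add: ext_prov_def Q_all_def E_def)
  qed
  show ?thesis using e1 e2 e3 f1 f2 f3 by blast
qed

end
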